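(* Let $\alpha, \beta_1, \beta_2 > 0$ and let $U_1, U_2, V_1, V_2$ be random variables with $U_1, U_2$ independent and $V_1, V_2$ independent. If $V_i \preceq_{(\alpha, \beta_i)} U_i$ for $i \in \{1,2\}$, then \[ \ln\!\big(e^{V_1} + e^{V_2}\big) \preceq_{(\alpha,\, \beta_1+\beta_2)} \ln\!\big(e^{U_1} + e^{U_2}\big). \]
   Context: For a random variable $X$ (possibly taking values $\pm\infty$) let $\bar{F}_X(x) = 1 - F_X(x)$ be its complementary CDF. Given $\alpha \ge 0$, $\beta \in [0,1]$, we write $V \preceq_{(\alpha,\beta)} U$ if $\bar{F}_V(x) \le \bar{F}_U(x-\alpha) + \beta$ for all $x \in [-\infty,\infty]$. *)

theory Defs
  imports "HOL-Probability.Probability"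
begin

definition exp_e :: "ereal \<Rightarrow> ereal" where
  "exp_e x = (case x of ereal r \<Rightarrow> ereal (exp r) | PInfty \<Rightarrow> \<infinity> | MInfty \<Rightarrow> 0)"

definition ln_e :: "ereal \<Rightarrow> ereal" where
  "ln_e y = (if y \<le> 0 then -\<infinity> else if y = \<infinity> then \<infinity> else ereal (ln (real_of_ereal y)))"

definition ccdf :: "'a measure \<Rightarrow> ('a \<Rightarrow> ereal) \<Rightarrow> ereal \<Rightarrow> real" where
  "ccdf M X x = 1 - measure M {\<omega> \<in> space M. X \<omega> \<le> x}"

definition stoch_le :: "'b measure \<Rightarrow> ('b \<Rightarrow> ereal) \<Rightarrow> 'a measure \<Rightarrow> ('a \<Rightarrow> ereal)
    \<Rightarrow> real \<Rightarrow> real \<Rightarrow> bool" where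
  "stoch_le N V M U \<alpha> \<beta> \<longleftrightarrow> (\<forall>x::ereal. ccdf N V x \<le> ccdf M U (x - ereal \<alpha>) + \<beta>)"

end

theory Submission imports Defs begin
lemma dec_helper:
  fixes \<mu> \<nu> :: "ereal measure" and s :: "nat \<Rightarrow> ereal"
  assumes "prob_space \<mu>" "prob_space \<nu>" "sets \<mu> = sets borel" "sets \<nu> = sets borel"
    and H: "\<And>n. measure \<mu> {s n<..} \<le> measure \<nu> {s n<..} + \<beta>"
    and dec: "\<And>n m. n \<le> m \<Longrightarrow> s n \<le> s m"
    and I: "(\<Inter>n. {s n<..}) = {t..}"
  shows "measure \<mu> {t..} \<le> measure \<nu> {t..} + \<beta>"
proof -
  interpret nu: prob_space \<nu> by fact
  interpret mu: prob_space \<mu> by fact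
  have r: "range (\<lambda>n. {s n<..}) \<subseteq> sets \<nu>" using assms(4) by (simp add: image_subset_iff)
  have a: "antimono (\<lambda>n. {s n<..})"
  proof (rule antimonoI)
    fix i j :: nat assume "i \<le> j" then have "s i \<le> s j" by (rule dec)
    then show "{s j<..} \<subseteq> {s i<..}" by (auto intro: order.strict_trans1)
  qed
  have "(\<lambda>n. measure \<nu> {s n<..}) \<longlonglongrightarrow> measure \<nu> (\<Inter>n. {s n<..})"
    by (rule nu.finite_Lim_measure_decseq[OF r a])
  then have L: "(\<lambda>n. measure \<nu> {s n<..}) \<longlonglongrightarrow> measure \<nu> {t..}" unfolding I .
  have "measure \<mu> {t..} - \<beta> \<le> measure \<nu> {t..}"
  proof (rule LIMSEQ_le_const[OF L], intro exI allI impI)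
    fix n
    have "{t..} \<subseteq> {s n<..}" using I by blast
    moreover have "{s n<..} \<in> sets \<mu>" using assms(3) by simp
    ultimately have "measure \<mu> {t..} \<le> measure \<mu> {s n<..}"
      by (rule mu.finite_measure_mono)
    then show "measure \<mu> {t..} - \<beta> \<le> measure \<nu> {s n<..}" using H[of n] by linarith
  qed
  then show ?thesis by linarith
qed

lemma upset_bound:
  fixes \<mu> \<nu> :: "ereal measure"
  assumes P: "prob_space \<mu>" "prob_space \<nu>" and S: "sets \<mu> = sets borel" "sets \<nu> = sets borel"
    and H: "\<And>x. measure \<mu> {x<..} \<le> measure \<nu> {x<..} + \<beta>" and b: "\<beta> \<ge> 0"
    and up: "\<And>a b. a \<in> Sx \<Longrightarrow> a \<le> b \<Longrightarrow> b \<in> Sx"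
  shows "measure \<mu> Sx \<le> measure \<nu> Sx + \<beta>"
proof -
  interpret nu: prob_space \<nu> by fact
  interpret mu: prob_space \<mu> by fact
  define t where "t = Inf Sx"
  show ?thesis
  proof (cases "t \<in> Sx")
    case False
    have "Sx = {t<..}"
    proof safe
      fix b assume "b \<in> Sx"
      then have "t \<le> b" unfolding t_def by (rule Inf_lower)
      then show "t < b" using False \<open>b \<in> Sx\<close> by (cases "t = b") auto
    next
      fix b assume "t < b"
      then obtain s where "s \<in> Sx" "s < b" unfolding t_def by (auto simp: Inf_less_iff)
      then show "b \<in> Sx" using up by auto
    qed
    then show ?thesis using H by simp
  next
    case True
    have Se: "Sx = {t..}"
    proof safe
      fix b assume "b \<in> Sx"
      then show "t \<le> b" unfolding t_def by (rule Inf_lower)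
    next
      fix b assume "t \<le> b"
      then show "b \<in> Sx" using up True by auto
    qed
    consider "t = -\<infinity>" | "t = \<infinity>" | r where "t = ereal r" by (cases t) auto
    then show ?thesis
    proof cases
      case 1
      then have "Sx = UNIV" using Se by auto
      moreover have "space \<mu> = UNIV" using sets_eq_imp_space_eq[OF S(1)] by simp
      moreover have "space \<nu> = UNIV" using sets_eq_imp_space_eq[OF S(2)] by simp
      ultimately show ?thesis using mu.prob_space nu.prob_space b by simp
    next
      case 2
      have "measure \<mu> {t..} \<le> measure \<nu> {t..} + \<beta>"
      proof (rule dec_helper[OF P S, of "\<lambda>n. ereal (real n)"])
        show "\<And>n. measure \<mu> {ereal (real n)<..} \<le> measure \<nu> {ereal (real n)<..} + \<beta>" using H by blast
        show "\<And>n m. n \<le> m \<Longrightarrow> ereal (real n) \<le> ereal (real m)" by simp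
        show "(\<Inter>n. {ereal (real n)<..}) = {t..}"
        proof safe
          fix b assume "b \<in> (\<Inter>n. {ereal (real n)<..})"
          then have "\<forall>n. ereal (real n) < b" by auto
          then have "b = \<infinity>"
          proof (cases b)
            case (real q)
            obtain n where "q < real n" using reals_Archimedean2 by blast
            moreover have "ereal (real n) < ereal q" using \<open>\<forall>n. ereal (real n) < b\<close> real by auto
            ultimately show ?thesis by simp
          qed (use \<open>\<forall>n. ereal (real n) < b\<close> in auto)
          then show "t \<le> b" by simp
        next
          fix b n assume "t \<le> b" then show "ereal (real n) < b" using 2 by simp
        qed
      qed
      then show ?thesis using Se by simp
    next
      case 3
      have "measure \<mu> {t..} \<le> measure \<nu> {t..} + \<beta>"
      proof (rule dec_helper[OF P S, of "\<lambda>n. ereal (r - 1 / Suc n)"])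
        show "\<And>n. measure \<mu> {ereal (r - 1 / Suc n)<..} \<le> measure \<nu> {ereal (r - 1 / Suc n)<..} + \<beta>" using H by blast
        show "\<And>n m. n \<le> m \<Longrightarrow> ereal (r - 1 / Suc n) \<le> ereal (r - 1 / Suc m)"
          by (simp add: frac_le)
        show "(\<Inter>n. {ereal (r - 1 / Suc n)<..}) = {t..}"
        proof safe
          fix b assume "b \<in> (\<Inter>n. {ereal (r - 1 / Suc n)<..})"
          then have A: "\<forall>n. ereal (r - 1 / Suc n) < b" by auto
          show "t \<le> b"
          proof (cases b)
            case (real q)
            have "\<forall>n. r - 1 / Suc n < q" using A real by auto
            have "r \<le> q"
            proof (rule ccontr)
              assume "\<not> r \<le> q"
              then obtain n where "inverse (real (Suc n)) < r - q" using reals_Archimedean[of "r - q"] by auto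
              then show False using \<open>\<forall>n. r - 1 / Suc n < q\<close>[rule_format, of n] by (simp add: field_simps)
            qed
            then show ?thesis using 3 real by simp
          qed (use A in auto)
        next
          fix b n assume "t \<le> b" then show "ereal (r - 1 / Suc n) < b" using 3
          proof (cases b)
            case (real q)
            have "0 < 1 / real (Suc n)" by simp
            moreover have "r \<le> q" using real 3 \<open>t \<le> b\<close> by simp
            ultimately have "r - 1 / real (Suc n) < q" by linarith
            then show ?thesis using real by simp
          qed auto
        qed
      qed
      then show ?thesis using Se by simp
    qed
  qed
qed
lemma emeas_bound:
  fixes \<mu> \<nu> :: "ereal measure"
  assumes P: "prob_space \<mu>" "prob_space \<nu>" and S: "sets \<mu> = sets borel" "sets \<nu> = sets borel"
    and H: "\<And>x. measure \<mu> {x<..} \<le> measure \<nu> {x<..} + \<beta>" and b: "\<beta> \<ge> 0"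
    and up: "\<And>a b. a \<in> Sx \<Longrightarrow> a \<le> b \<Longrightarrow> b \<in> Sx"
  shows "emeasure \<mu> Sx \<le> emeasure \<nu> Sx + ennreal \<beta>"
proof -
  interpret nu: prob_space \<nu> by fact
  interpret mu: prob_space \<mu> by fact
  have "measure \<mu> Sx \<le> measure \<nu> Sx + \<beta>" by (rule upset_bound[OF P S H b up])
  then have "ennreal (measure \<mu> Sx) \<le> ennreal (measure \<nu> Sx + \<beta>)" by (rule ennreal_leI)
  also have "\<dots> = ennreal (measure \<nu> Sx) + ennreal \<beta>" using b by (simp add: ennreal_plus)
  finally show ?thesis by (simp add: mu.emeasure_eq_measure nu.emeasure_eq_measure)
qed

lemma swap_first:
  fixes \<mu> \<nu> :: "ereal measure" and \<rho> :: "'c measure"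
  assumes P: "prob_space \<mu>" "prob_space \<nu>" and S: "sets \<mu> = sets borel" "sets \<nu> = sets borel"
    and R: "prob_space \<rho>"
    and H: "\<And>x. measure \<mu> {x<..} \<le> measure \<nu> {x<..} + \<beta>" and b: "\<beta> \<ge> 0"
    and A: "A \<in> sets (borel \<Otimes>\<^sub>M \<rho>)"
    and up: "\<And>a a' c. (a, c) \<in> A \<Longrightarrow> a \<le> a' \<Longrightarrow> (a', c) \<in> A"
  shows "emeasure (\<mu> \<Otimes>\<^sub>M \<rho>) A \<le> emeasure (\<nu> \<Otimes>\<^sub>M \<rho>) A + ennreal \<beta>"
proof -
  interpret nu: prob_space \<nu> by fact
  interpret mu: prob_space \<mu> by fact
  interpret rho: prob_space \<rho> by fact
  interpret p1: pair_sigma_finite \<mu> \<rho> unfolding pair_sigma_finite_def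
    using mu.sigma_finite_measure_axioms rho.sigma_finite_measure_axioms by simp
  interpret p2: pair_sigma_finite \<nu> \<rho> unfolding pair_sigma_finite_def
    using nu.sigma_finite_measure_axioms rho.sigma_finite_measure_axioms by simp
  have A1: "A \<in> sets (\<mu> \<Otimes>\<^sub>M \<rho>)" using A sets_pair_measure_cong[OF S(1), of \<rho> \<rho>] by simp
  have A2: "A \<in> sets (\<nu> \<Otimes>\<^sub>M \<rho>)" using A sets_pair_measure_cong[OF S(2), of \<rho> \<rho>] by simp
  have "emeasure (\<mu> \<Otimes>\<^sub>M \<rho>) A = (\<integral>\<^sup>+y. emeasure \<mu> ((\<lambda>x. (x, y)) -` A) \<partial>\<rho>)"
    by (rule p1.emeasure_pair_measure_alt2[OF A1])
  also have "\<dots> \<le> (\<integral>\<^sup>+y. emeasure \<nu> ((\<lambda>x. (x, y)) -` A) + ennreal \<beta> \<partial>\<rho>)"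
    by (intro nn_integral_mono emeas_bound[OF P S H b]) (auto intro: up)
  also have "\<dots> = (\<integral>\<^sup>+y. emeasure \<nu> ((\<lambda>x. (x, y)) -` A) \<partial>\<rho>) + (\<integral>\<^sup>+y. ennreal \<beta> \<partial>\<rho>)"
    by (intro nn_integral_add p2.measurable_emeasure_Pair2[OF A2]) auto
  also have "\<dots> = emeasure (\<nu> \<Otimes>\<^sub>M \<rho>) A + ennreal \<beta>"
    using p2.emeasure_pair_measure_alt2[OF A2] rho.emeasure_space_1 by simp
  finally show ?thesis .
qed

lemma swap_second:
  fixes \<mu> \<nu> :: "ereal measure" and \<rho> :: "'c measure"
  assumes P: "prob_space \<mu>" "prob_space \<nu>" and S: "sets \<mu> = sets borel" "sets \<nu> = sets borel"
    and R: "prob_space \<rho>"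
    and H: "\<And>x. measure \<mu> {x<..} \<le> measure \<nu> {x<..} + \<beta>" and b: "\<beta> \<ge> 0"
    and A: "A \<in> sets (\<rho> \<Otimes>\<^sub>M borel)"
    and up: "\<And>a a' c. (c, a) \<in> A \<Longrightarrow> a \<le> a' \<Longrightarrow> (c, a') \<in> A"
  shows "emeasure (\<rho> \<Otimes>\<^sub>M \<mu>) A \<le> emeasure (\<rho> \<Otimes>\<^sub>M \<nu>) A + ennreal \<beta>"
proof -
  interpret nu: prob_space \<nu> by fact
  interpret mu: prob_space \<mu> by fact
  interpret rho: prob_space \<rho> by fact
  have A1: "A \<in> sets (\<rho> \<Otimes>\<^sub>M \<mu>)" using A sets_pair_measure_cong[of \<rho> \<rho>, OF refl S(1)] by simp
  have A2: "A \<in> sets (\<rho> \<Otimes>\<^sub>M \<nu>)" using A sets_pair_measure_cong[of \<rho> \<rho>, OF refl S(2)] by simp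
  have "emeasure (\<rho> \<Otimes>\<^sub>M \<mu>) A = (\<integral>\<^sup>+x. emeasure \<mu> (Pair x -` A) \<partial>\<rho>)"
    by (rule mu.emeasure_pair_measure_alt[OF A1])
  also have "\<dots> \<le> (\<integral>\<^sup>+x. emeasure \<nu> (Pair x -` A) + ennreal \<beta> \<partial>\<rho>)"
    by (intro nn_integral_mono emeas_bound[OF P S H b]) (auto intro: up)
  also have "\<dots> = (\<integral>\<^sup>+x. emeasure \<nu> (Pair x -` A) \<partial>\<rho>) + (\<integral>\<^sup>+x. ennreal \<beta> \<partial>\<rho>)"
    by (intro nn_integral_add nu.measurable_emeasure_Pair[OF A2]) auto
  also have "\<dots> = emeasure (\<rho> \<Otimes>\<^sub>M \<nu>) A + ennreal \<beta>"
    using nu.emeasure_pair_measure_alt[OF A2] rho.emeasure_space_1 by simp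
  finally show ?thesis .
qed

lemma exp_e_mono: "mono exp_e"
proof (rule monoI)
  fix a b :: ereal assume "a \<le> b" then show "exp_e a \<le> exp_e b"
    by (cases a; cases b) (auto simp: exp_e_def)
qed

lemma exp_e_nonneg: "exp_e a \<ge> 0"
  by (cases a) (auto simp: exp_e_def)

lemma ln_e_mono: "mono ln_e"
proof (rule monoI)
  fix a b :: ereal assume "a \<le> b" then show "ln_e a \<le> ln_e b"
    by (cases a; cases b) (auto simp: ln_e_def)
qed

lemma g_mono: "a \<le> a' \<Longrightarrow> b \<le> b' \<Longrightarrow> ln_e (exp_e a + exp_e b) \<le> ln_e (exp_e a' + exp_e b')"
  by (intro monoD[OF ln_e_mono] add_mono monoD[OF exp_e_mono])

lemma exp_e_shift: "exp_e (a + ereal c) = exp_e a * ereal (exp c)"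
  by (cases a) (auto simp: exp_e_def exp_add)

lemma ln_e_shift: "y \<ge> 0 \<Longrightarrow> ln_e (y * ereal (exp c)) = ln_e y + ereal c"
  by (cases y) (auto simp: ln_e_def ln_mult zero_less_mult_iff mult_le_0_iff)

lemma g_shift: "ln_e (exp_e (a + ereal c) + exp_e (b + ereal c)) = ln_e (exp_e a + exp_e b) + ereal c"
proof -
  have "exp_e (a + ereal c) + exp_e (b + ereal c) = (exp_e a + exp_e b) * ereal (exp c)"
    unfolding exp_e_shift using exp_e_nonneg[of a] exp_e_nonneg[of b]
    by (simp add: ereal_distrib ereal_right_distrib)
  then show ?thesis using ln_e_shift[of "exp_e a + exp_e b" c] exp_e_nonneg[of a] exp_e_nonneg[of b] by simp
qed

lemma ereal_shift_less: "x < z + ereal c \<longleftrightarrow> x - ereal c < (z::ereal)"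
  by (cases x; cases z) auto

lemma upset_borel:
  fixes S :: "ereal set"
  assumes up: "\<And>a b. a \<in> S \<Longrightarrow> a \<le> b \<Longrightarrow> b \<in> S"
  shows "S \<in> sets borel"
proof (cases "Inf S \<in> S")
  case True
  have "S = {Inf S..}"
  proof safe
    fix b assume "b \<in> S" then show "Inf S \<le> b" by (rule Inf_lower)
  next
    fix b assume "Inf S \<le> b" then show "b \<in> S" using up True by auto
  qed
  then show ?thesis by (metis borel_closed closed_atLeast)
next
  case False
  have "S = {Inf S<..}"
  proof safe
    fix b assume "b \<in> S"
    then have "Inf S \<le> b" by (rule Inf_lower)
    then show "Inf S < b" using False \<open>b \<in> S\<close> by (cases "Inf S = b") auto
  next
    fix b assume "Inf S < b"
    then obtain s where "s \<in> S" "s < b" by (auto simp: Inf_less_iff)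
    then show "b \<in> S" using up by auto
  qed
  then show ?thesis by (metis borel_open open_greaterThan)
qed

lemma mono_ereal_meas:
  fixes f :: "ereal \<Rightarrow> ereal"
  assumes "mono f" shows "f \<in> borel_measurable borel"
proof (rule borel_measurableI_greater)
  fix y
  have "{x. y < f x} \<in> sets borel"
  proof (rule upset_borel)
    fix a b assume "a \<in> {x. y < f x}" "a \<le> b"
    then show "b \<in> {x. y < f x}" using monoD[OF assms \<open>a \<le> b\<close>] by auto
  qed
  then show "{x \<in> space borel. y < f x} \<in> sets borel" by simp
qed

lemma exp_e_meas[measurable]: "exp_e \<in> borel_measurable borel"
  by (rule mono_ereal_meas[OF exp_e_mono])
lemma ln_e_meas[measurable]: "ln_e \<in> borel_measurable borel"
  by (rule mono_ereal_meas[OF ln_e_mono])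

lemma g_meas: "(\<lambda>p. ln_e (exp_e (fst p) + exp_e (snd p))) \<in> borel_measurable (borel \<Otimes>\<^sub>M borel)"
proof -
  show ?thesis by measurable
qed

lemma ccdf_eq:
  assumes "prob_space M" "X \<in> borel_measurable M"
  shows "ccdf M X y = measure M {\<omega> \<in> space M. y < X \<omega>}"
proof -
  interpret prob_space M by fact
  have "{\<omega> \<in> space M. X \<omega> \<le> y} \<in> events" using assms(2) by measurable
  then have "prob (space M - {\<omega> \<in> space M. X \<omega> \<le> y}) = 1 - prob {\<omega> \<in> space M. X \<omega> \<le> y}"
    by (rule prob_compl)
  moreover have "space M - {\<omega> \<in> space M. X \<omega> \<le> y} = {\<omega> \<in> space M. y < X \<omega>}" by auto
  ultimately show ?thesis unfolding ccdf_def by simp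
qed

theorem mainTheorem4:
  fixes M :: "'a measure" and N :: "'b measure"
    and U1 U2 :: "'a \<Rightarrow> ereal" and V1 V2 :: "'b \<Rightarrow> ereal"
    and \<alpha> \<beta>1 \<beta>2 :: real
  assumes "prob_space M" and "prob_space N"
    and "U1 \<in> borel_measurable M" and "U2 \<in> borel_measurable M"
    and "V1 \<in> borel_measurable N" and "V2 \<in> borel_measurable N"
    and "prob_space.indep_var M borel U1 borel U2"
    and "prob_space.indep_var N borel V1 borel V2"
    and "\<alpha> > 0" and "\<beta>1 > 0" and "\<beta>2 > 0"
    and "stoch_le N V1 M U1 \<alpha> \<beta>1" and "stoch_le N V2 M U2 \<alpha> \<beta>2"
  shows "stoch_le N (\<lambda>\<omega>. ln_e (exp_e (V1 \<omega>) + exp_e (V2 \<omega>)))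
                  M (\<lambda>\<omega>. ln_e (exp_e (U1 \<omega>) + exp_e (U2 \<omega>))) \<alpha> (\<beta>1 + \<beta>2)"
proof -
  interpret M: prob_space M by fact
  interpret N: prob_space N by fact
  note [measurable] = assms(3-6)
  define U1' where "U1' = (\<lambda>\<omega>. U1 \<omega> + ereal \<alpha>)"
  define U2' where "U2' = (\<lambda>\<omega>. U2 \<omega> + ereal \<alpha>)"
  have [measurable]: "U1' \<in> borel_measurable M" "U2' \<in> borel_measurable M"
    unfolding U1'_def U2'_def by measurable
  define \<mu>1 where "\<mu>1 = distr N borel V1"
  define \<mu>2 where "\<mu>2 = distr N borel V2"
  define \<nu>1 where "\<nu>1 = distr M borel U1'"
  define \<nu>2 where "\<nu>2 = distr M borel U2'"
  have P: "prob_space \<mu>1" "prob_space \<mu>2" "prob_space \<nu>1" "prob_space \<nu>2"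
    unfolding \<mu>1_def \<mu>2_def \<nu>1_def \<nu>2_def by (auto intro!: M.prob_space_distr N.prob_space_distr)
  have S: "sets \<mu>1 = sets borel" "sets \<mu>2 = sets borel" "sets \<nu>1 = sets borel" "sets \<nu>2 = sets borel"
    unfolding \<mu>1_def \<mu>2_def \<nu>1_def \<nu>2_def by auto
  have H: "measure (distr N borel V) {y<..} \<le> measure (distr M borel (\<lambda>\<omega>. U \<omega> + ereal \<alpha>)) {y<..} + \<beta>"
    if "stoch_le N V M U \<alpha> \<beta>" "V \<in> borel_measurable N" "U \<in> borel_measurable M" for V U \<beta> y
  proof -
    have "measure (distr N borel V) {y<..} = measure N (V -` {y<..} \<inter> space N)"
      using that by (intro measure_distr) auto
    also have "V -` {y<..} \<inter> space N = {\<omega> \<in> space N. y < V \<omega>}" by auto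
    also have "measure N \<dots> = ccdf N V y" using ccdf_eq[OF assms(2) that(2)] by simp
    finally have 1: "measure (distr N borel V) {y<..} = ccdf N V y" .
    have "measure (distr M borel (\<lambda>\<omega>. U \<omega> + ereal \<alpha>)) {y<..} = measure M ((\<lambda>\<omega>. U \<omega> + ereal \<alpha>) -` {y<..} \<inter> space M)"
      using that by (intro measure_distr) auto
    also have "(\<lambda>\<omega>. U \<omega> + ereal \<alpha>) -` {y<..} \<inter> space M = {\<omega> \<in> space M. y - ereal \<alpha> < U \<omega>}"
      using ereal_shift_less by auto
    also have "measure M \<dots> = ccdf M U (y - ereal \<alpha>)" using ccdf_eq[OF assms(1) that(3)] by simp
    finally have 2: "measure (distr M borel (\<lambda>\<omega>. U \<omega> + ereal \<alpha>)) {y<..} = ccdf M U (y - ereal \<alpha>)" .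
    show ?thesis using that(1) unfolding stoch_le_def 1 2 by blast
  qed
  have H1: "\<And>y. measure \<mu>1 {y<..} \<le> measure \<nu>1 {y<..} + \<beta>1"
    unfolding \<mu>1_def \<nu>1_def U1'_def by (rule H[OF assms(12) assms(5) assms(3)])
  have H2: "\<And>y. measure \<mu>2 {y<..} \<le> measure \<nu>2 {y<..} + \<beta>2"
    unfolding \<mu>2_def \<nu>2_def U2'_def by (rule H[OF assms(13) assms(6) assms(4)])
  have "M.indep_var borel ((\<lambda>u. u + ereal \<alpha>) \<circ> U1) borel ((\<lambda>u. u + ereal \<alpha>) \<circ> U2)"
    by (rule M.indep_var_compose[OF assms(7)]) measurable
  then have indU: "M.indep_var borel U1' borel U2'"
    unfolding U1'_def U2'_def comp_def .
  have jU: "distr M (borel \<Otimes>\<^sub>M borel) (\<lambda>\<omega>. (U1' \<omega>, U2' \<omega>)) = \<nu>1 \<Otimes>\<^sub>M \<nu>2"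
    using indU unfolding M.indep_var_distribution_eq \<nu>1_def \<nu>2_def by simp
  have jV: "distr N (borel \<Otimes>\<^sub>M borel) (\<lambda>\<omega>. (V1 \<omega>, V2 \<omega>)) = \<mu>1 \<Otimes>\<^sub>M \<mu>2"
    using assms(8) unfolding N.indep_var_distribution_eq \<mu>1_def \<mu>2_def by simp
  show ?thesis unfolding stoch_le_def
  proof
    fix x :: ereal
    define A where "A = {p \<in> space (borel \<Otimes>\<^sub>M borel). x < ln_e (exp_e (fst p) + exp_e (snd p))}"
    have A: "A \<in> sets (borel \<Otimes>\<^sub>M borel)" unfolding A_def by measurable
    have A2: "A \<in> sets (borel \<Otimes>\<^sub>M \<mu>2)"
      using A by (simp only: sets_pair_measure_cong[of borel borel \<mu>2 borel, OF refl S(2)])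
    have A3: "A \<in> sets (\<nu>1 \<Otimes>\<^sub>M borel)"
      using A by (simp only: sets_pair_measure_cong[of \<nu>1 borel borel borel, OF S(3) refl])
    have b1: "\<beta>1 \<ge> 0" and b2: "\<beta>2 \<ge> 0" using assms(10,11) by auto
    have up1: "(a', c) \<in> A" if "(a, c) \<in> A" "a \<le> a'" for a a' c
      using that g_mono[of a a' c c] unfolding A_def by (auto simp: space_pair_measure)
    have up2: "(c, a') \<in> A" if "(c, a) \<in> A" "a \<le> a'" for a a' c
      using that g_mono[of c c a a'] unfolding A_def by (auto simp: space_pair_measure)
    have EV: "emeasure N {\<omega> \<in> space N. x < ln_e (exp_e (V1 \<omega>) + exp_e (V2 \<omega>))} = emeasure (\<mu>1 \<Otimes>\<^sub>M \<mu>2) A"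
    proof -
      have "emeasure (\<mu>1 \<Otimes>\<^sub>M \<mu>2) A = emeasure N ((\<lambda>\<omega>. (V1 \<omega>, V2 \<omega>)) -` A \<inter> space N)"
        unfolding jV[symmetric] using A by (intro emeasure_distr) auto
      also have "(\<lambda>\<omega>. (V1 \<omega>, V2 \<omega>)) -` A \<inter> space N = {\<omega> \<in> space N. x < ln_e (exp_e (V1 \<omega>) + exp_e (V2 \<omega>))}"
        unfolding A_def by (auto simp: space_pair_measure)
      finally show ?thesis by simp
    qed
    have EU: "emeasure M {\<omega> \<in> space M. x - ereal \<alpha> < ln_e (exp_e (U1 \<omega>) + exp_e (U2 \<omega>))} = emeasure (\<nu>1 \<Otimes>\<^sub>M \<nu>2) A"
    proof -
      have "emeasure (\<nu>1 \<Otimes>\<^sub>M \<nu>2) A = emeasure M ((\<lambda>\<omega>. (U1' \<omega>, U2' \<omega>)) -` A \<inter> space M)"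
        unfolding jU[symmetric] using A by (intro emeasure_distr) auto
      also have "(\<lambda>\<omega>. (U1' \<omega>, U2' \<omega>)) -` A \<inter> space M = {\<omega> \<in> space M. x - ereal \<alpha> < ln_e (exp_e (U1 \<omega>) + exp_e (U2 \<omega>))}"
        unfolding A_def U1'_def U2'_def by (auto simp: space_pair_measure g_shift ereal_shift_less)
      finally show ?thesis by simp
    qed
    have "emeasure (\<mu>1 \<Otimes>\<^sub>M \<mu>2) A \<le> emeasure (\<nu>1 \<Otimes>\<^sub>M \<mu>2) A + ennreal \<beta>1"
      by (rule swap_first[OF P(1) P(3) S(1) S(3) P(2) H1 b1 A2 up1])
    also have "emeasure (\<nu>1 \<Otimes>\<^sub>M \<mu>2) A \<le> emeasure (\<nu>1 \<Otimes>\<^sub>M \<nu>2) A + ennreal \<beta>2"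
      by (rule swap_second[OF P(2) P(4) S(2) S(4) P(3) H2 b2 A3 up2])
    finally have E1: "emeasure N {\<omega> \<in> space N. x < ln_e (exp_e (V1 \<omega>) + exp_e (V2 \<omega>))}
        \<le> emeasure M {\<omega> \<in> space M. x - ereal \<alpha> < ln_e (exp_e (U1 \<omega>) + exp_e (U2 \<omega>))} + ennreal \<beta>2 + ennreal \<beta>1"
      unfolding EV EU by (simp add: add_right_mono)
    define m where "m = measure M {\<omega> \<in> space M. x - ereal \<alpha> < ln_e (exp_e (U1 \<omega>) + exp_e (U2 \<omega>))}"
    define n where "n = measure N {\<omega> \<in> space N. x < ln_e (exp_e (V1 \<omega>) + exp_e (V2 \<omega>))}"
    have m0: "m \<ge> 0" unfolding m_def by simp
    have "ennreal (m + (\<beta>1 + \<beta>2)) = ennreal m + (ennreal \<beta>1 + ennreal \<beta>2)"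
      using m0 b1 b2 by (simp add: ennreal_plus)
    also have "\<dots> = ennreal m + ennreal \<beta>2 + ennreal \<beta>1"
      by (simp add: ac_simps)
    finally have E2: "ennreal n \<le> ennreal (m + (\<beta>1 + \<beta>2))"
      using E1 unfolding m_def n_def by (simp add: M.emeasure_eq_measure N.emeasure_eq_measure)
    have "n \<le> m + (\<beta>1 + \<beta>2)"
      using E2 m0 b1 b2 by (subst (asm) ennreal_le_iff) auto
    then have "measure N {\<omega> \<in> space N. x < ln_e (exp_e (V1 \<omega>) + exp_e (V2 \<omega>))}
        \<le> measure M {\<omega> \<in> space M. x - ereal \<alpha> < ln_e (exp_e (U1 \<omega>) + exp_e (U2 \<omega>))} + (\<beta>1 + \<beta>2)"
      unfolding m_def n_def .
    then show "ccdf N (\<lambda>\<omega>. ln_e (exp_e (V1 \<omega>) + exp_e (V2 \<omega>))) x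
        \<le> ccdf M (\<lambda>\<omega>. ln_e (exp_e (U1 \<omega>) + exp_e (U2 \<omega>))) (x - ereal \<alpha>) + (\<beta>1 + \<beta>2)"
      by (subst ccdf_eq[OF assms(2)], measurable, subst ccdf_eq[OF assms(1)], measurable)
  qed
qed

end
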